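(* For every CABA framework $F_c$, $\mathit{GrCInst}(\mathit{CArg})=\mathit{GrCInst}(\mathit{MGCArg})$.
   Context: Conventions. $\mathsf X$ denotes a tuple of variables and $\mathsf t$ a tuple of terms. A substitution $\vartheta=\{X_1/t_1,\dots,X_n/t_n\}$ maps distinct variables to terms; $e\vartheta$ replaces each occurrence of $X_i$ in $e$ by $t_i$; $\{\mathsf X/\mathsf t\}$ maps $\mathsf X$ componentwise to $\mathsf t$. An object is ground if it has no variables. Theory of constraints. $\mathcal{CT}$ is a first-order theory with equality whose atomic formulas form the set $\mathcal C$ of constraints; a finite set $\{c_1,\dots,c_n\}\subseteq\mathcal C$ is consistent if $\mathcal{CT}\models\exists(c_1\wedge\dots\wedge c_n)$. CABA framework $F_c=\langle\mathcal L_c,\mathcal C,\mathcal R,\mathcal{CT},\mathcal A,\overline{\cdot}\rangle$: $\mathcal L_c$ a set of atoms; $\mathcal C\subseteq\mathcal L_c$ the constraints of $\mathcal{CT}$; $\mathcal R$ a set of rules $s_0\leftarrow s_1,\dots,s_m$ ($s_0\in\mathcal L_c\setminus\mathcal C$, $s_i\in\mathcal L_c$), in normalised form $p(\mathsf X_0)\leftarrow C,p_1(\mathsf X_1),\dots,p_m(\mathsf X_m)$ with $C\subseteq\mathcal C$ and each $\mathsf X_i$ a tuple of distinct variables; $\mathcal A\subseteq\mathcal L_c\setminus\mathcal C$ a nonempty set of assumptions that are not heads of rules; $\overline\cdot:\mathcal A\to\mathcal L_c\setminus\mathcal C$ a total contrary map with $\overline{p(\mathsf t)}=cp(\mathsf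 t)$ for a fixed predicate $cp$ per assumption predicate $p$; $\mathcal L_c,\mathcal C,\mathcal A$ predicate closed. Tight constrained argument $C\cup A\vdash_R s$ (consistent $C\subseteq\mathcal C$, $A\subseteq\mathcal A$, $R\subseteq\mathcal R$, $s\in\mathcal L_c\setminus\mathcal C$): a finite tree with root $s$ in which every non-leaf node $p(\mathsf t)$ has as children exactly $s_1\vartheta,\dots,s_m\vartheta$ for exactly one renamed-apart copy $p(\mathsf X)\leftarrow s_1,\dots,s_m$ of a rule in $R$, $\vartheta=\{\mathsf X/\mathsf t\}$ (or the single child true for a fact), every leaf being a constraint in $C$, an assumption in $A$ or true; $C,A,R$ are exactly the constraints, assumptions and rules of the tree. Most general: tight with claim of the form $p(\mathsf X)$. A constrained argument is $C'\cup A'\vdash_R s'$ such that there are a tight constrained argument $C\cup A\vdash_R s$, a substitution $\vartheta$ and $D\subseteq\mathcal C$ with $C'=C\vartheta\cup D$, $A'=A\vartheta$, $s'=s\vartheta$ and $C'$ consistent. $\alpha'=C'\cup A'\vdash_R s'$ is a constrained instance (via $\vartheta$, $D$) of a constrained argument $\alpha=C\cup A\vdash_R s$ if $C'=C\vartheta\cup D$, $A'=A\vartheta$, $s'=s\vartheta$ and $C'$ is consistent. $\mathit{MGCArg}$, $\mathit{CArg}$: sets of most general and of all constrained arguments of $F_c$. $\mathit{GrCInst}(\alpha)$ is the set of ground constrained instances of $\alpha$, and $\mathit{GrCInst}(\Gamma)=\bigcup_{\alpha\in\Gamma}\mathit{GrCInst}(\alpha)$. *)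

theory Defs
  imports Main
begin

datatype ('f,'v) trm = Var 'v | Fn 'f "('f,'v) trm list"

type_synonym ('p,'f,'v) atom = "'p \<times> ('f,'v) trm list"

text \<open>A rule s0 <- s1,...,sm is a pair (head, body list).\<close>
type_synonym ('p,'f,'v) rule = "('p,'f,'v) atom \<times> ('p,'f,'v) atom list"

fun tvars :: "('f,'v) trm \<Rightarrow> 'v set" where
  "tvars (Var x) = {x}"
| "tvars (Fn f ts) = (\<Union>t\<in>set ts. tvars t)"

definition avars :: "('p,'f,'v) atom \<Rightarrow> 'v set" where
  "avars a = (\<Union>t\<in>set (snd a). tvars t)"

definition rvars :: "('p,'f,'v) rule \<Rightarrow> 'v set" where
  "rvars r = avars (fst r) \<union> (\<Union>b\<in>set (snd r). avars b)"

fun tsubst :: "('v \<Rightarrow> ('f,'v) trm) \<Rightarrow> ('f,'v) trm \<Rightarrow> ('f,'v) trm" where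
  "tsubst \<sigma> (Var x) = \<sigma> x"
| "tsubst \<sigma> (Fn f ts) = Fn f (map (tsubst \<sigma>) ts)"

definition asubst :: "('v \<Rightarrow> ('f,'v) trm) \<Rightarrow> ('p,'f,'v) atom \<Rightarrow> ('p,'f,'v) atom" where
  "asubst \<sigma> a = (fst a, map (tsubst \<sigma>) (snd a))"

definition rename :: "('v \<Rightarrow> 'v) \<Rightarrow> ('p,'f,'v) rule \<Rightarrow> ('p,'f,'v) rule" where
  "rename \<rho> r = (asubst (Var \<circ> \<rho>) (fst r), map (asubst (Var \<circ> \<rho>)) (snd r))"

fun var_of :: "('f,'v) trm \<Rightarrow> 'v" where
  "var_of (Var x) = x"
| "var_of (Fn f ts) = undefined"

definition bind :: "'v list \<Rightarrow> ('f,'v) trm list \<Rightarrow> 'v \<Rightarrow> ('f,'v) trm" where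
  "bind Xs ts x = (case map_of (zip Xs ts) x of Some t \<Rightarrow> t | None \<Rightarrow> Var x)"

definition is_var_tuple :: "('f,'v) trm list \<Rightarrow> bool" where
  "is_var_tuple ts \<longleftrightarrow> (\<exists>Xs. ts = map Var Xs \<and> distinct Xs)"

type_synonym ('f,'p,'d) struct = "('f \<Rightarrow> 'd list \<Rightarrow> 'd) \<times> ('p \<Rightarrow> 'd list \<Rightarrow> bool)"

fun eval :: "('f,'p,'d) struct \<Rightarrow> ('v \<Rightarrow> 'd) \<Rightarrow> ('f,'v) trm \<Rightarrow> 'd" where
  "eval M val (Var x) = val x"
| "eval M val (Fn f ts) = fst M f (map (eval M val) ts)"

definition holds :: "('f,'p,'d) struct \<Rightarrow> ('v \<Rightarrow> 'd) \<Rightarrow> ('p,'f,'v) atom \<Rightarrow> bool" where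
  "holds M val a = snd M (fst a) (map (eval M val) (snd a))"

text \<open>The language L_c, the constraints C and the assumptions A are predicate closed,
  hence given by sets of predicate symbols. The theory CT is given by its class of models
  (over the domain type 'd); eqp is the equality predicate of CT.\<close>
record ('p,'f,'v,'d) caba =
  preds :: "'p set"
  cpreds :: "'p set"
  apreds :: "'p set"
  contr :: "'p \<Rightarrow> 'p"
  rules :: "('p,'f,'v) rule set"
  eqp :: 'p
  models :: "('f,'p,'d) struct set"

definition normalised :: "'p set \<Rightarrow> ('p,'f,'v) rule \<Rightarrow> bool" where
  "normalised CP r \<longleftrightarrow> is_var_tuple (snd (fst r)) \<and>
     (\<forall>b\<in>set (snd r). fst b \<notin> CP \<longrightarrow> is_var_tuple (snd b))"

definition caba_framework :: "('p,'f,'v,'d) caba \<Rightarrow> bool" where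
  "caba_framework F \<longleftrightarrow>
     cpreds F \<subseteq> preds F \<and> apreds F \<subseteq> preds F - cpreds F \<and> apreds F \<noteq> {} \<and>
     eqp F \<in> cpreds F \<and>
     (\<forall>M\<in>models F. \<forall>x y. snd M (eqp F) [x, y] = (x = y)) \<and>
     (\<forall>p\<in>apreds F. contr F p \<in> preds F - cpreds F) \<and>
     (\<forall>r\<in>rules F. normalised (cpreds F) r \<and>
        fst (fst r) \<in> preds F - cpreds F - apreds F \<and>
        (\<forall>b\<in>set (snd r). fst b \<in> preds F))"

definition consistent :: "('p,'f,'v,'d) caba \<Rightarrow> ('p,'f,'v) atom set \<Rightarrow> bool" where
  "consistent F C \<longleftrightarrow> finite C \<and> fst ` C \<subseteq> cpreds F \<and>
     (\<forall>M\<in>models F. \<exists>val. \<forall>c\<in>C. holds M val c)"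

text \<open>ALeaf a: a leaf labelled by a constraint or assumption; ATrue: the leaf true;
  ANode a r rho cs: a node labelled a, expanded with the copy (rename rho r) of rule r.\<close>
datatype ('p,'f,'v) atree =
    ALeaf "('p,'f,'v) atom"
  | ATrue
  | ANode "('p,'f,'v) atom" "('p,'f,'v) rule" "'v \<Rightarrow> 'v" "('p,'f,'v) atree list"

fun label :: "('p,'f,'v) atree \<Rightarrow> ('p,'f,'v) atom option" where
  "label (ALeaf a) = Some a"
| "label ATrue = None"
| "label (ANode a r \<rho> cs) = Some a"

fun wf_tree :: "('p,'f,'v,'d) caba \<Rightarrow> ('p,'f,'v) atree \<Rightarrow> bool" where
  "wf_tree F (ALeaf a) = (fst a \<in> cpreds F \<or> fst a \<in> apreds F)"
| "wf_tree F ATrue = True"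
| "wf_tree F (ANode a r \<rho> cs) =
     (r \<in> rules F \<and> inj \<rho> \<and>
      (let h = fst (rename \<rho> r); bd = snd (rename \<rho> r);
           \<theta> = bind (map var_of (snd h)) (snd a)
       in fst h = fst a \<and> length (snd h) = length (snd a) \<and>
          (if bd = [] then cs = [ATrue] else map label cs = map (Some \<circ> asubst \<theta>) bd)) \<and>
      (\<forall>c\<in>set cs. wf_tree F c))"

fun tcopies :: "('p,'f,'v) atree \<Rightarrow> ('p,'f,'v) rule list" where
  "tcopies (ALeaf a) = []"
| "tcopies ATrue = []"
| "tcopies (ANode a r \<rho> cs) = rename \<rho> r # concat (map tcopies cs)"

fun tleaves :: "('p,'f,'v) atree \<Rightarrow> ('p,'f,'v) atom set" where
  "tleaves (ALeaf a) = {a}"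
| "tleaves ATrue = {}"
| "tleaves (ANode a r \<rho> cs) = (\<Union>c\<in>set cs. tleaves c)"

fun trules :: "('p,'f,'v) atree \<Rightarrow> ('p,'f,'v) rule set" where
  "trules (ALeaf a) = {}"
| "trules ATrue = {}"
| "trules (ANode a r \<rho> cs) = insert r (\<Union>c\<in>set cs. trules c)"

definition renamed_apart :: "('p,'f,'v) atree \<Rightarrow> bool" where
  "renamed_apart t \<longleftrightarrow>
     (let cps = tcopies t in
       (\<forall>i<length cps. \<forall>j<length cps. i \<noteq> j \<longrightarrow> rvars (cps ! i) \<inter> rvars (cps ! j) = {}) \<and>
       (\<forall>i<length cps. \<forall>a. label t = Some a \<longrightarrow> rvars (cps ! i) \<inter> avars a = {}))"

text \<open>An argument C \<union> A |-_R s is represented by the tuple (C, A, R, s).\<close>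
type_synonym ('p,'f,'v) carg =
  "('p,'f,'v) atom set \<times> ('p,'f,'v) atom set \<times> ('p,'f,'v) rule set \<times> ('p,'f,'v) atom"

definition tight :: "('p,'f,'v,'d) caba \<Rightarrow> ('p,'f,'v) carg \<Rightarrow> bool" where
  "tight F \<alpha> \<longleftrightarrow> (case \<alpha> of (C, A, R, s) \<Rightarrow>
     fst s \<in> preds F - cpreds F \<and> consistent F C \<and>
     (\<exists>t. wf_tree F t \<and> renamed_apart t \<and> label t = Some s \<and>
          C = {a\<in>tleaves t. fst a \<in> cpreds F} \<and>
          A = {a\<in>tleaves t. fst a \<in> apreds F} \<and>
          R = trules t))"

definition MGCArg :: "('p,'f,'v,'d) caba \<Rightarrow> ('p,'f,'v) carg set" where
  "MGCArg F = {(C, A, R, s). tight F (C, A, R, s) \<and> is_var_tuple (snd s)}"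

definition cinst :: "('p,'f,'v,'d) caba \<Rightarrow> ('p,'f,'v) carg \<Rightarrow> ('p,'f,'v) carg \<Rightarrow> bool" where
  "cinst F \<alpha> \<alpha>' \<longleftrightarrow> (case \<alpha> of (C, A, R, s) \<Rightarrow> case \<alpha>' of (C', A', R', s') \<Rightarrow>
     R' = R \<and> (\<exists>\<theta> D. fst ` D \<subseteq> cpreds F \<and>
        C' = asubst \<theta> ` C \<union> D \<and> A' = asubst \<theta> ` A \<and> s' = asubst \<theta> s \<and>
        consistent F C'))"

definition CArg :: "('p,'f,'v,'d) caba \<Rightarrow> ('p,'f,'v) carg set" where
  "CArg F = {\<alpha>'. \<exists>\<alpha>. tight F \<alpha> \<and> cinst F \<alpha> \<alpha>'}"

definition ground_carg :: "('p,'f,'v) carg \<Rightarrow> bool" where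
  "ground_carg \<alpha> \<longleftrightarrow> (case \<alpha> of (C, A, R, s) \<Rightarrow>
     (\<forall>c\<in>C. avars c = {}) \<and> (\<forall>a\<in>A. avars a = {}) \<and> avars s = {})"

definition GrCInst :: "('p,'f,'v,'d) caba \<Rightarrow> ('p,'f,'v) carg set \<Rightarrow> ('p,'f,'v) carg set" where
  "GrCInst F \<Gamma> = (\<Union>\<alpha>\<in>\<Gamma>. {\<alpha>'. cinst F \<alpha> \<alpha>' \<and> ground_carg \<alpha>'})"

end

theory Submission
  imports Defs
begin

lemma tsubst_Var: "tsubst Var u = u"
  by (induction u) (auto simp: map_idI)

lemma asubst_Var: "asubst Var a = a"
  by (cases a) (simp add: asubst_def tsubst_Var map_idI)

lemma tsubst_comp: "tsubst \<tau> (tsubst \<sigma> u) = tsubst (\<lambda>x. tsubst \<tau> (\<sigma> x)) u"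
  by (induction u) auto

lemma asubst_comp: "asubst \<tau> (asubst \<sigma> a) = asubst (\<lambda>x. tsubst \<tau> (\<sigma> x)) a"
  by (simp add: asubst_def tsubst_comp)

lemma fst_asubst[simp]: "fst (asubst \<sigma> a) = fst a"
  by (simp add: asubst_def)

lemma eval_tsubst: "eval M val (tsubst \<sigma> u) = eval M (\<lambda>x. eval M val (\<sigma> x)) u"
  by (induction u) (auto simp: o_def cong: map_cong)

lemma holds_asubst: "holds M val (asubst \<sigma> a) = holds M (\<lambda>x. eval M val (\<sigma> x)) a"
  by (simp add: holds_def asubst_def eval_tsubst o_def)

lemma map_of_zip_map: "map_of (zip Y (map f g)) y = map_option f (map_of (zip Y g) y)"
  by (induction Y arbitrary: g) (auto simp: zip_Cons1 split: list.splits)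

lemma tsubst_bind_comm:
  "(\<forall>y\<in>tvars u. \<sigma> y = Var y) \<Longrightarrow>
   tsubst \<sigma> (tsubst (bind Y g) u) = tsubst (bind Y (map (tsubst \<sigma>) g)) u"
  by (induction u) (auto simp: bind_def map_of_zip_map split: option.splits)

lemma asubst_bind_comm:
  "(\<forall>y\<in>avars a. \<sigma> y = Var y) \<Longrightarrow>
   asubst \<sigma> (asubst (bind Y g) a) = asubst (bind Y (map (tsubst \<sigma>) g)) a"
  by (auto simp: asubst_def avars_def tsubst_bind_comm)

lemma bind_distinct: "distinct X \<Longrightarrow> length X = length ts \<Longrightarrow> map (bind X ts) X = ts"
proof (induction X arbitrary: ts)
  case Nil then show ?case by simp
next
  case (Cons x X)
  then obtain t ts' where ts: "ts = t # ts'" by (cases ts) auto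
  have "map (bind (x#X) ts) X = map (bind X ts') X"
    using Cons.prems by (auto simp: bind_def ts intro!: map_cong)
  moreover have "bind (x#X) ts x = t" by (simp add: bind_def ts)
  ultimately show ?case using Cons by (simp add: ts cong: map_cong)
qed

lemma bind_notin: "y \<notin> set X \<Longrightarrow> bind X ts y = Var y"
  by (auto simp: bind_def dest: map_of_SomeD set_zip_leftD split: option.splits)

lemma finite_tvars: "finite (tvars u)"
  by (induction u) auto

lemma finite_avars: "finite (avars a)"
  by (simp add: avars_def finite_tvars)

lemma finite_rvars: "finite (rvars r)"
  by (simp add: rvars_def finite_avars)

lemma finite_tleaves: "finite (tleaves t)"
  by (induction t) auto

lemma cinst_trans:
  assumes "cinst F \<alpha> \<beta>" "cinst F \<beta> \<gamma>" shows "cinst F \<alpha> \<gamma>"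
proof -
  obtain C A R s where a: "\<alpha> = (C, A, R, s)" by (cases \<alpha>) auto
  obtain C1 A1 R1 s1 where b: "\<beta> = (C1, A1, R1, s1)" by (cases \<beta>) auto
  obtain C2 A2 R2 s2 where c: "\<gamma> = (C2, A2, R2, s2)" by (cases \<gamma>) auto
  from assms(1) obtain \<theta>1 D1 where 1: "R1 = R" "fst ` D1 \<subseteq> cpreds F"
    "C1 = asubst \<theta>1 ` C \<union> D1" "A1 = asubst \<theta>1 ` A" "s1 = asubst \<theta>1 s"
    unfolding cinst_def a b by auto
  from assms(2) obtain \<theta>2 D2 where 2: "R2 = R1" "fst ` D2 \<subseteq> cpreds F"
    "C2 = asubst \<theta>2 ` C1 \<union> D2" "A2 = asubst \<theta>2 ` A1" "s2 = asubst \<theta>2 s1"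
    "consistent F C2"
    unfolding cinst_def b c by auto
  let ?\<theta> = "\<lambda>x. tsubst \<theta>2 (\<theta>1 x)"
  let ?D = "asubst \<theta>2 ` D1 \<union> D2"
  have "fst ` ?D \<subseteq> cpreds F" using 1 2 by (auto simp: image_iff)
  moreover have "C2 = asubst ?\<theta> ` C \<union> ?D"
    using 1 2 by (auto simp: image_Un image_image asubst_comp)
  moreover have "A2 = asubst ?\<theta> ` A" using 1 2 by (auto simp: image_image asubst_comp)
  moreover have "s2 = asubst ?\<theta> s" using 1 2 by (simp add: asubst_comp)
  ultimately show ?thesis using 1 2 unfolding cinst_def a c by auto
qed


lemma size_mem_le: "c \<in> set cs \<Longrightarrow> size c \<le> size_list size cs"
  by (rule size_list_estimation') auto

function regen :: "('p,'f,'v) atom \<Rightarrow> ('p,'f,'v) atree \<Rightarrow> ('p,'f,'v) atree" where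
  "regen a' (ALeaf a) = ALeaf a'"
| "regen a' ATrue = ATrue"
| "regen a' (ANode a r \<rho> cs) =
     ANode a' r \<rho> (if snd (rename \<rho> r) = [] then cs else
       map (\<lambda>(b, c). regen (asubst (bind (map var_of (snd (fst (rename \<rho> r)))) (snd a')) b) c)
         (zip (snd (rename \<rho> r)) cs))"
  by pat_completeness auto
termination
  apply (relation "measure (\<lambda>(a, t). size t)")
   apply simp
  apply clarsimp
  apply (drule set_zip_rightD)
  apply (drule size_mem_le)
  by simp

lemma regen_props:
  assumes "wf_tree F t" "label t = Some (asubst \<sigma> a')"
    "\<forall>x\<in>\<Union>(rvars ` set (tcopies t)). \<sigma> x = Var x"
  shows "wf_tree F (regen a' t) \<and> label (regen a' t) = Some a' \<and>
    tcopies (regen a' t) = tcopies t \<and> trules (regen a' t) = trules t \<and>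
    tleaves t = asubst \<sigma> ` tleaves (regen a' t)"
  using assms
proof (induction t arbitrary: a')
  case (ALeaf a)
  then show ?case by auto
next
  case ATrue
  then show ?case by auto
next
  case (ANode a r \<rho> cs)
  define h where "h = fst (rename \<rho> r)"
  define bd where "bd = snd (rename \<rho> r)"
  define Y where "Y = map var_of (snd h)"
  define \<theta> where "\<theta> = bind Y (snd a)"
  define \<theta>' where "\<theta>' = bind Y (snd a')"
  have a: "a = asubst \<sigma> a'" using ANode.prems by simp
  have wf: "r \<in> rules F" "inj \<rho>" "fst h = fst a" "length (snd h) = length (snd a)"
    "if bd = [] then cs = [ATrue] else map label cs = map (Some \<circ> asubst \<theta>) bd"
    "\<forall>c\<in>set cs. wf_tree F c"
    using ANode.prems(1) by (auto simp: h_def bd_def Y_def \<theta>_def Let_def)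
  have sid: "\<forall>x\<in>rvars (rename \<rho> r). \<sigma> x = Var x" using ANode.prems(3) by simp
  show ?case
  proof (cases "bd = []")
    case True
    then have "cs = [ATrue]" using wf(5) by simp
    then show ?thesis using True wf a by (simp add: h_def bd_def Let_def asubst_def)
  next
    case False
    then have lab: "map label cs = map (Some \<circ> asubst \<theta>) bd" using wf(5) by simp
    then have len: "length cs = length bd" by (metis length_map)
    define cs' where "cs' = map (\<lambda>i. regen (asubst \<theta>' (bd ! i)) (cs ! i)) [0..<length cs]"
    have "regen a' (ANode a r \<rho> cs) =
      ANode a' r \<rho> (map (\<lambda>(b,c). regen (asubst \<theta>' b) c) (zip bd cs))"
      using False by (simp add: h_def bd_def Y_def \<theta>'_def)
    moreover have "map (\<lambda>(b,c). regen (asubst \<theta>' b) c) (zip bd cs) = cs'"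
      using len unfolding cs'_def by (intro nth_equalityI) auto
    ultimately have reg: "regen a' (ANode a r \<rho> cs) = ANode a' r \<rho> cs'" by simp
    have lencs': "length cs' = length cs" by (simp add: cs'_def)
    have IHi: "wf_tree F (cs' ! i) \<and> label (cs' ! i) = Some (asubst \<theta>' (bd ! i)) \<and>
      tcopies (cs' ! i) = tcopies (cs ! i) \<and> trules (cs' ! i) = trules (cs ! i) \<and>
      tleaves (cs ! i) = asubst \<sigma> ` tleaves (cs' ! i)" if i: "i < length cs" for i
    proof -
      have bdi: "bd ! i \<in> set (snd (rename \<rho> r))" using i len by (simp add: bd_def)
      have "avars (bd ! i) \<subseteq> rvars (rename \<rho> r)" using bdi by (auto simp: rvars_def)
      then have "asubst \<sigma> (asubst \<theta>' (bd ! i)) = asubst (bind Y (map (tsubst \<sigma>) (snd a'))) (bd ! i)"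
        unfolding \<theta>'_def using sid by (intro asubst_bind_comm) auto
      also have "\<dots> = asubst \<theta> (bd ! i)" using a by (simp add: \<theta>_def asubst_def)
      finally have l: "label (cs ! i) = Some (asubst \<sigma> (asubst \<theta>' (bd ! i)))"
        using lab i len by (metis comp_apply nth_map)
      have "\<forall>x\<in>\<Union>(rvars ` set (tcopies (cs ! i))). \<sigma> x = Var x"
        using ANode.prems(3) i by force
      moreover have "cs ! i \<in> set cs" using i by simp
      ultimately show ?thesis using ANode.IH[of "cs ! i"] wf(6) l i
        by (simp add: cs'_def)
    qed
    have wfn: "wf_tree F (ANode a' r \<rho> cs')"
    proof -
      have "map label cs' = map (Some \<circ> asubst \<theta>') bd"
        using IHi lencs' len by (simp add: list_eq_iff_nth_eq)
      moreover have "\<forall>c\<in>set cs'. wf_tree F c" using IHi lencs' by (auto simp: in_set_conv_nth)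
      moreover have "fst h = fst a'" using wf(3) a by simp
      moreover have "length (snd h) = length (snd a')" using wf(4) a by (simp add: asubst_def)
      ultimately show ?thesis using wf(1,2) False
        unfolding wf_tree.simps Let_def h_def[symmetric] bd_def[symmetric]
          Y_def[symmetric] \<theta>'_def[symmetric]
        by simp
    qed
    have tc: "map tcopies cs' = map tcopies cs" using IHi lencs' by (simp add: list_eq_iff_nth_eq)
    have tr: "(\<Union>c\<in>set cs'. trules c) = (\<Union>c\<in>set cs. trules c)"
    proof -
      have "map trules cs' = map trules cs" using IHi lencs' by (simp add: list_eq_iff_nth_eq)
      then have "trules ` set cs' = trules ` set cs" by (metis set_map)
      then show ?thesis by simp
    qed
    have tl: "(\<Union>c\<in>set cs. tleaves c) = asubst \<sigma> ` (\<Union>c\<in>set cs'. tleaves c)"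
    proof -
      have "map tleaves cs = map (\<lambda>c. asubst \<sigma> ` tleaves c) cs'"
        using IHi lencs' by (simp add: list_eq_iff_nth_eq)
      then have "tleaves ` set cs = (\<lambda>c. asubst \<sigma> ` tleaves c) ` set cs'" by (metis set_map)
      then show ?thesis by (simp add: image_UN)
    qed
    show ?thesis using reg wfn tc tr tl by simp
  qed
qed


lemma fresh_vars:
  assumes "infinite (UNIV :: 'v set)" "finite (V :: 'v set)"
  shows "\<exists>X. distinct X \<and> length X = n \<and> set X \<inter> V = {}"
proof -
  have "infinite (UNIV - V)" using assms by (simp add: Diff_infinite_finite)
  then obtain B where B: "finite B" "card B = n" "B \<subseteq> UNIV - V"
    using infinite_arbitrarily_large by blast
  obtain X where "set X = B" "distinct X" using finite_distinct_list[OF B(1)] by blast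
  then show ?thesis using B distinct_card by fastforce
qed

lemma tight_to_mg:
  assumes inf: "infinite (UNIV :: 'v set)" and t: "tight F (\<alpha> :: ('p,'f,'v) carg)"
  shows "\<exists>\<alpha>g\<in>MGCArg F. cinst F \<alpha>g \<alpha>"
proof -
  obtain C A R s where a: "\<alpha> = (C, A, R, s)" by (cases \<alpha>) auto
  obtain p ts where s: "s = (p, ts)" by (cases s) auto
  from t obtain tr where tr: "fst s \<in> preds F - cpreds F" "consistent F C"
    "wf_tree F tr" "renamed_apart tr" "label tr = Some s"
    "C = {a\<in>tleaves tr. fst a \<in> cpreds F}" "A = {a\<in>tleaves tr. fst a \<in> apreds F}"
    "R = trules tr"
    unfolding tight_def a by auto
  define V where "V = \<Union>(rvars ` set (tcopies tr))"
  have "finite V" by (simp add: V_def finite_rvars)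
  then obtain X where X: "distinct X" "length X = length ts" "set X \<inter> V = {}"
    using fresh_vars[OF inf] by blast
  define \<sigma> where "\<sigma> = bind X ts"
  define a' :: "('p,'f,'v) atom" where "a' = (p, map Var X)"
  have sa: "asubst \<sigma> a' = s"
    using X by (simp add: a'_def s asubst_def o_def \<sigma>_def bind_distinct)
  have sid: "\<forall>x\<in>V. \<sigma> x = Var x" using X unfolding \<sigma>_def by (intro ballI bind_notin) auto
  have P: "wf_tree F (regen a' tr) \<and> label (regen a' tr) = Some a' \<and>
    tcopies (regen a' tr) = tcopies tr \<and> trules (regen a' tr) = trules tr \<and>
    tleaves tr = asubst \<sigma> ` tleaves (regen a' tr)"
  proof (rule regen_props[OF tr(3)])
    show "label tr = Some (asubst \<sigma> a')" using tr(5) sa by simp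
    show "\<forall>x\<in>\<Union>(rvars ` set (tcopies tr)). \<sigma> x = Var x" using sid by (simp add: V_def)
  qed
  let ?g = "regen a' tr"
  define Cg where "Cg = {a\<in>tleaves ?g. fst a \<in> cpreds F}"
  define Ag where "Ag = {a\<in>tleaves ?g. fst a \<in> apreds F}"
  have CC: "C = asubst \<sigma> ` Cg" using P tr(6) by (auto simp: Cg_def)
  have AA: "A = asubst \<sigma> ` Ag" using P tr(7) by (auto simp: Ag_def)
  have avX: "avars a' = set X" by (simp add: a'_def avars_def)
  have ra: "renamed_apart ?g"
    using tr(4) P X(3) avX unfolding renamed_apart_def Let_def V_def
    by (auto simp: in_set_conv_nth) (metis nth_mem disjoint_iff UN_I)
  have cons: "consistent F Cg"
  proof -
    have "finite Cg" unfolding Cg_def by (rule finite_subset[OF _ finite_tleaves[of ?g]]) auto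
    moreover have "fst ` Cg \<subseteq> cpreds F" by (auto simp: Cg_def)
    moreover have "\<forall>M\<in>models F. \<exists>val. \<forall>c\<in>Cg. holds M val c"
    proof
      fix M assume "M \<in> models F"
      then obtain val where "\<forall>c\<in>C. holds M val c" using tr(2) by (auto simp: consistent_def)
      then have "\<forall>c\<in>Cg. holds M (\<lambda>x. eval M val (\<sigma> x)) c"
        using CC by (auto simp: holds_asubst)
      then show "\<exists>val. \<forall>c\<in>Cg. holds M val c" by blast
    qed
    ultimately show ?thesis by (simp add: consistent_def)
  qed
  have "tight F (Cg, Ag, R, a')"
    unfolding tight_def using tr(1) s cons P ra tr(8)
    by (auto simp: a'_def Cg_def Ag_def intro!: exI[of _ ?g])
  then have mg: "(Cg, Ag, R, a') \<in> MGCArg F"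
    using X by (auto simp: MGCArg_def a'_def is_var_tuple_def)
  have "cinst F (Cg, Ag, R, a') \<alpha>"
    unfolding cinst_def a using CC AA sa tr(2)
    by (auto intro!: exI[of _ \<sigma>] exI[of _ "{}"])
  then show ?thesis using mg by blast
qed

theorem corollary5p9:
  fixes F :: "('p,'f,'v,'d) caba"
  assumes "infinite (UNIV :: 'v set)"
    and "caba_framework F"
  shows "GrCInst F (CArg F) = GrCInst F (MGCArg F)"
proof
  show "GrCInst F (CArg F) \<subseteq> GrCInst F (MGCArg F)"
  proof
    fix \<gamma> assume "\<gamma> \<in> GrCInst F (CArg F)"
    then obtain \<beta> \<alpha> where g: "cinst F \<beta> \<gamma>" "ground_carg \<gamma>" "tight F \<alpha>" "cinst F \<alpha> \<beta>"
      unfolding GrCInst_def CArg_def by blast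
    obtain \<alpha>g where "\<alpha>g \<in> MGCArg F" "cinst F \<alpha>g \<alpha>"
      using tight_to_mg[OF assms(1) g(3)] by blast
    then show "\<gamma> \<in> GrCInst F (MGCArg F)"
    proof -
      have "cinst F \<alpha>g \<gamma>" using cinst_trans \<open>cinst F \<alpha>g \<alpha>\<close> g(4) g(1) by blast
      then show ?thesis unfolding GrCInst_def using g(2) \<open>\<alpha>g \<in> MGCArg F\<close> by blast
    qed
  qed
next
  have "MGCArg F \<subseteq> CArg F"
  proof
    fix \<alpha> assume m: "\<alpha> \<in> MGCArg F"
    obtain C A R s where a: "\<alpha> = (C, A, R, s)" by (cases \<alpha>) auto
    have t: "tight F \<alpha>" using m a by (simp add: MGCArg_def)
    then have "consistent F C" by (simp add: tight_def a)
    then have "cinst F \<alpha> \<alpha>" unfolding cinst_def a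
      apply simp
      apply (rule exI[of _ Var])
      apply (rule exI[of _ "{}"])
      by (simp add: asubst_Var)
    then show "\<alpha> \<in> CArg F" using t unfolding CArg_def by blast
  qed
  then show "GrCInst F (MGCArg F) \<subseteq> GrCInst F (CArg F)"
    unfolding GrCInst_def by blast
qed

end
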